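(* Let $b\in L^1(\mathbb{R}_+)$, $\lambda>0$, and let $\varphi$ be the solution of $\varphi''-\lambda^2\tilde m^2(t)\varphi=0$ on $[0,\infty)$ described in the context. Set $\nu(t)=-\varphi'(t)/\varphi(t)$. Then there exists $\delta_2\in(0,1)$ such that $\lambda\delta_2\le\nu(t)\le\lambda/\delta_2$ for all $t\ge0$.
   Context: $m(t)=e^{\int_0^tb(\tau)d\tau}$, $h(t)=\int_0^t\frac{d\tau}{m(\tau)}$, $\eta=h^{-1}$ (inverse function), $\tilde m(t)=m(\eta(t))$, $k=\exp(\int_0^\infty b(\tau)d\tau)$. $\varphi$ is the solution of $\varphi''=\lambda^2\tilde m^2\varphi$ for which there exists $t_0\ge0$ such that $(\varphi(t),\varphi'(t))=\big(1+o(1),\,-\lambda k+o(1)\big)e^{-\lambda\int_{t_0}^t\tilde m(\tau)d\tau}$ as $t\to\infty$. *)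

theory Defs
  imports "HOL-Analysis.Analysis"
begin

definition m_fun :: "(real \<Rightarrow> real) \<Rightarrow> real \<Rightarrow> real" where
  "m_fun b t = exp (integral {0..t} b)"

definition h_fun :: "(real \<Rightarrow> real) \<Rightarrow> real \<Rightarrow> real" where
  "h_fun b t = integral {0..t} (\<lambda>\<tau>. 1 / m_fun b \<tau>)"

definition eta_fun :: "(real \<Rightarrow> real) \<Rightarrow> real \<Rightarrow> real" where
  "eta_fun b = inv_into {0..} (h_fun b)"

definition mt_fun :: "(real \<Rightarrow> real) \<Rightarrow> real \<Rightarrow> real" where
  "mt_fun b t = m_fun b (eta_fun b t)"

definition k_const :: "(real \<Rightarrow> real) \<Rightarrow> real" where
  "k_const b = exp (integral {0..} b)"

end

theory Submission
  imports Defs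
begin

lemma mono_helper:
  fixes f f' :: "real \<Rightarrow> real"
  assumes d: "\<And>t. t \<ge> 0 \<Longrightarrow> (f has_real_derivative f' t) (at t within {0..})"
    and ab: "0 \<le> a" "a \<le> b"
    and nn: "\<And>x. a < x \<Longrightarrow> x < b \<Longrightarrow> f' x \<ge> 0"
  shows "f a \<le> f b"
proof (rule DERIV_nonneg_imp_increasing_open[OF ab(2)])
  fix x assume x: "a < x" "x < b"
  have "x \<in> interior {0::real..}" using x ab by simp
  then have "at x within {0..} = at x" by (rule at_within_interior)
  then have "(f has_real_derivative f' x) (at x)" using d[of x] x ab by simp
  then show "\<exists>y. (f has_real_derivative y) (at x) \<and> 0 \<le> y" using nn x by blast
next
  have "continuous_on {0..} f" by (rule DERIV_continuous_on) (use d in auto)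
  then show "continuous_on {a..b} f" by (rule continuous_on_subset) (use ab in auto)
qed

theorem lemma3p2:
  fixes b :: "real \<Rightarrow> real" and lam :: real
    and phi dphi :: "real \<Rightarrow> real"
  assumes b_L1: "b absolutely_integrable_on {0..}"
    and lam_pos: "lam > 0"
    and phi_deriv: "\<And>t. t \<ge> 0 \<Longrightarrow> (phi has_real_derivative dphi t) (at t within {0..})"
    and dphi_deriv: "\<And>t. t \<ge> 0 \<Longrightarrow>
          (dphi has_real_derivative (lam\<^sup>2 * (mt_fun b t)\<^sup>2 * phi t)) (at t within {0..})"
    and asym: "\<exists>t0 \<ge> 0.
          ((\<lambda>t. phi t * exp (lam * integral {t0..t} (mt_fun b))) \<longlongrightarrow> 1) at_top \<and>
          ((\<lambda>t. dphi t * exp (lam * integral {t0..t} (mt_fun b))) \<longlongrightarrow> - lam * k_const b) at_top"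
  shows "\<exists>\<delta>2. 0 < \<delta>2 \<and> \<delta>2 < 1 \<and>
           (\<forall>t \<ge> 0. lam * \<delta>2 \<le> - dphi t / phi t \<and> - dphi t / phi t \<le> lam / \<delta>2)"
proof -
  obtain t0 where L1: "((\<lambda>t. phi t * exp (lam * integral {t0..t} (mt_fun b))) \<longlongrightarrow> 1) at_top"
    and L2: "((\<lambda>t. dphi t * exp (lam * integral {t0..t} (mt_fun b))) \<longlongrightarrow> - lam * k_const b) at_top"
    using asym by blast
  define E where "E t = exp (lam * integral {t0..t} (mt_fun b))" for t
  define k where "k = k_const b"
  have kpos: "k > 0" unfolding k_def k_const_def by simp
  have Epos: "E t > 0" for t unfolding E_def by simp
  have L1': "((\<lambda>t. phi t * E t) \<longlongrightarrow> 1) at_top" using L1 unfolding E_def .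
  have L2': "((\<lambda>t. dphi t * E t) \<longlongrightarrow> - lam * k) at_top" using L2 unfolding E_def k_def .
  have ev1: "eventually (\<lambda>t. phi t * E t > 0) at_top"
    using order_tendstoD(1)[OF L1'] by simp
  have ev1': "eventually (\<lambda>t. phi t > 0) at_top"
    using ev1 by eventually_elim (metis Epos less_asym zero_less_mult_iff)
  have "((\<lambda>t. (dphi t * E t) / (phi t * E t)) \<longlongrightarrow> (- lam * k) / 1) at_top"
    by (rule tendsto_divide[OF L2' L1']) simp
  then have "((\<lambda>t. - ((dphi t * E t) / (phi t * E t))) \<longlongrightarrow> lam * k) at_top"
    using tendsto_minus by fastforce
  moreover have "\<forall>t. - ((dphi t * E t) / (phi t * E t)) = - dphi t / phi t"
  proof
    fix t
    have "E t \<noteq> 0" using Epos[of t] by simp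
    then show "- ((dphi t * E t) / (phi t * E t)) = - dphi t / phi t" by simp
  qed
  ultimately have Lnu: "((\<lambda>t. - dphi t / phi t) \<longlongrightarrow> lam * k) at_top" by simp
  have lk: "lam * k > 0" using lam_pos kpos by simp
  have ev2: "eventually (\<lambda>t. - dphi t / phi t > lam * k / 2) at_top"
  proof -
    have "lam * k / 2 < lam * k" using lk by linarith
    from order_tendstoD(1)[OF Lnu this] show ?thesis .
  qed
  have ev3: "eventually (\<lambda>t. - dphi t / phi t < 2 * lam * k) at_top"
  proof -
    have "lam * k < 2 * lam * k" using lk by linarith
    from order_tendstoD(2)[OF Lnu this] show ?thesis .
  qed
  have "eventually (\<lambda>t. t \<ge> 0 \<and> phi t > 0 \<and> - dphi t / phi t > lam * k / 2 \<and>
      - dphi t / phi t < 2 * lam * k) at_top"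
    using ev1' ev2 ev3 eventually_ge_at_top[of 0] by eventually_elim auto
  then obtain T where T: "\<And>t. t \<ge> T \<Longrightarrow> t \<ge> 0 \<and> phi t > 0 \<and> - dphi t / phi t > lam * k / 2 \<and>
      - dphi t / phi t < 2 * lam * k"
    unfolding eventually_at_top_linorder by blast
  have T0: "T \<ge> 0" using T[of T] by simp
  have dT: "dphi t < 0" if "t \<ge> T" for t
  proof -
    have "phi t > 0" "- dphi t / phi t > 0" using T[OF that] lk by auto
    then show ?thesis by (simp add: divide_less_0_iff zero_less_divide_iff)
  qed
  have contphi: "continuous_on {0..} phi" by (rule DERIV_continuous_on) (use phi_deriv in auto)
  have contdphi: "continuous_on {0..} dphi" by (rule DERIV_continuous_on) (use dphi_deriv in auto)
  have d2nn: "lam\<^sup>2 * (mt_fun b t)\<^sup>2 * phi t \<ge> 0" if "phi t \<ge> 0" for t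
    using that by simp
  have phipos: "phi s > 0" if s: "0 \<le> s" for s
  proof (rule ccontr)
    assume neg: "\<not> phi s > 0"
    then have sT: "s \<le> T" using T[of s] by force
    define Z where "Z = {0..T} \<inter> phi -` {..0}"
    have cZ: "closed Z" unfolding Z_def
      by (rule continuous_closed_preimage) (auto intro: continuous_on_subset[OF contphi])
    have sZ: "s \<in> Z" unfolding Z_def using s sT neg by auto
    have bZ: "bdd_above Z" unfolding Z_def by (auto intro: bdd_aboveI[of _ T])
    define s' where "s' = Sup Z"
    have s'Z: "s' \<in> Z" unfolding s'_def using closed_contains_Sup[OF _ bZ cZ] sZ by blast
    have s'ub: "z \<le> s'" if "z \<in> Z" for z unfolding s'_def using cSup_upper[OF that bZ] .
    have s'0: "0 \<le> s'" "s' \<le> T" "phi s' \<le> 0" using s'Z unfolding Z_def by auto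
    have posr: "phi x > 0" if "s' < x" "x \<le> T" for x
    proof (rule ccontr)
      assume "\<not> phi x > 0"
      then have "x \<in> Z" unfolding Z_def using that s'0 by auto
      then show False using s'ub that by force
    qed
    have dneg: "dphi x < 0" if "s' < x" "x \<le> T" for x
    proof -
      have "dphi x \<le> dphi T"
        by (rule mono_helper[OF dphi_deriv]) (use that s'0 in \<open>auto intro!: d2nn less_imp_le[OF posr]\<close>)
      then show ?thesis using dT[of T] by simp
    qed
    have "- phi s' \<le> - phi T"
      by (rule mono_helper[where f' = "\<lambda>t. - dphi t"]) 
        (use phi_deriv s'0 dneg in \<open>auto intro!: DERIV_minus less_imp_le\<close>)
    then show False using T[of T] s'0 by simp
  qed
  have dneg: "dphi t < 0" if "0 \<le> t" for t
  proof (cases "t \<le> T")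
    case True
    have "dphi t \<le> dphi T"
      by (rule mono_helper[OF dphi_deriv]) (use that True in \<open>auto intro!: d2nn less_imp_le[OF phipos]\<close>)
    then show ?thesis using dT[of T] by simp
  next
    case False then show ?thesis using dT by simp
  qed
  have contnu: "continuous_on {0..T} (\<lambda>t. - dphi t / phi t)"
    by (intro continuous_on_divide continuous_on_minus)
       (auto intro: continuous_on_subset[OF contphi] continuous_on_subset[OF contdphi]
        simp: less_imp_neq[symmetric] phipos)
  obtain x1 where x1: "x1 \<in> {0..T}" "\<And>y. y \<in> {0..T} \<Longrightarrow> - dphi x1 / phi x1 \<le> - dphi y / phi y"
    using continuous_attains_inf[OF compact_Icc _ contnu] T0 by auto
  obtain x2 where x2: "x2 \<in> {0..T}" "\<And>y. y \<in> {0..T} \<Longrightarrow> - dphi y / phi y \<le> - dphi x2 / phi x2"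
    using continuous_attains_sup[OF compact_Icc _ contnu] T0 by auto
  define c where "c = - dphi x1 / phi x1"
  define C where "C = - dphi x2 / phi x2"
  have cpos: "c > 0" unfolding c_def using phipos[of x1] dneg[of x1] x1(1)
    by (simp add: divide_neg_pos)
  define L where "L = min c (lam * k / 2)"
  define U where "U = max C (2 * lam * k)"
  have Lpos: "L > 0" unfolding L_def using cpos lk by simp
  have LU: "L \<le> U" unfolding L_def U_def using x1 x2 T0 c_def C_def
    by (smt (verit) atLeastAtMost_iff order_refl)
  have Upos: "U > 0" using Lpos LU by simp
  have bnd: "L \<le> - dphi t / phi t \<and> - dphi t / phi t \<le> U" if "t \<ge> 0" for t
  proof (cases "t \<le> T")
    case True
    then show ?thesis using x1(2)[of t] x2(2)[of t] that unfolding L_def U_def c_def C_def by auto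
  next
    case False
    then have "lam * k / 2 < - dphi t / phi t" "- dphi t / phi t < 2 * lam * k" using T[of t] by auto
    then show ?thesis unfolding L_def U_def by linarith
  qed
  define \<delta> where "\<delta> = min (1/2) (min (L / lam) (lam / U))"
  have dpos: "\<delta> > 0" unfolding \<delta>_def using Lpos Upos lam_pos by simp
  have d1: "\<delta> < 1" unfolding \<delta>_def by simp
  have dl: "lam * \<delta> \<le> L"
  proof -
    have "\<delta> \<le> L / lam" unfolding \<delta>_def by simp
    then show ?thesis using lam_pos by (simp add: field_simps)
  qed
  have du: "U \<le> lam / \<delta>"
  proof -
    have "\<delta> \<le> lam / U" unfolding \<delta>_def by simp
    then have "\<delta> * U \<le> lam" using Upos by (simp add: field_simps)
    then show ?thesis using dpos by (simp add: field_simps)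
  qed
  show ?thesis
    by (rule exI[of _ \<delta>]) (use dpos d1 dl du bnd in force)
qed

end
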